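(* Let $K\ge 2$, $\eta>0$, and $\mathbf r\in\mathbb R^K$. For $\boldsymbol\theta\in\mathbb R^K$ let $\pi_{\boldsymbol\theta}(a)=\exp(\theta(a))/\sum_{b}\exp(\theta(b))$ be the softmax policy over $K$ actions and define $$\Phi_\eta(\boldsymbol\theta)=\pi_{\boldsymbol\theta}^\top\mathbf r+\frac1\eta\sum_{a}\log\pi_{\boldsymbol\theta}(a).$$ Let $H(\boldsymbol\theta)\in\mathbb R^{K\times K}$ be the Hessian of $\Phi_\eta$ at $\boldsymbol\theta$. Then for all $\boldsymbol\theta\in\mathbb R^K$, all $\mathbf r\in\mathbb R^K$ and all $\mathbf y\in\mathbb R^K$, $$\big|\mathbf y^\top H(\boldsymbol\theta)\mathbf y\big|\le 3\Big(\|\nabla_{\boldsymbol\theta}\Phi_\eta(\boldsymbol\theta)\|_2+\frac{5K}{\eta}\Big)\|\mathbf y\|_2^2 .$$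
   Context: $\Phi_\eta$ is the log-barrier regularized expected reward of a softmax policy in a $K$-armed bandit with mean reward vector $\mathbf r$; $1/\eta$ is the barrier strength. *)

theory Defs
  imports "HOL-Analysis.Analysis"
begin

text \<open>Softmax policy over the finite action type 'n (K = CARD('n)).\<close>
definition softmax :: "real^'n::finite \<Rightarrow> 'n \<Rightarrow> real" where
  "softmax \<theta> a = exp (\<theta> $ a) / (\<Sum>b\<in>UNIV. exp (\<theta> $ b))"

definition Phi :: "real \<Rightarrow> real^'n::finite \<Rightarrow> real^'n \<Rightarrow> real" where
  "Phi \<eta> r \<theta> = (\<Sum>a\<in>UNIV. softmax \<theta> a * r $ a) + (1 / \<eta>) * (\<Sum>a\<in>UNIV. ln (softmax \<theta> a))"

definition grad :: "(real^'n::finite \<Rightarrow> real) \<Rightarrow> real^'n \<Rightarrow> real^'n" where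
  "grad f x = (SOME g. (f has_derivative (\<lambda>h. g \<bullet> h)) (at x))"

definition hessian :: "(real^'n::finite \<Rightarrow> real) \<Rightarrow> real^'n \<Rightarrow> real^'n^'n" where
  "hessian f x = jacobian (grad f) (at x)"

end

theory Submission
  imports Defs
begin

lemma vec_nth_has_derivative[derivative_intros]:
  "(f has_derivative f') F \<Longrightarrow> ((\<lambda>x. f x $ i) has_derivative (\<lambda>x. f' x $ i)) F"
  by (rule bounded_linear.has_derivative[OF bounded_linear_vec_nth])

definition Zs :: "real^'n::finite \<Rightarrow> real" where
  "Zs \<theta> = (\<Sum>b\<in>UNIV. exp (\<theta> $ b))"

lemma Zs_pos: "Zs \<theta> > 0"
  unfolding Zs_def by (rule sum_pos) auto

lemma softmax_alt: "softmax \<theta> a = exp (\<theta> $ a) / Zs \<theta>"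
  by (simp add: softmax_def Zs_def)

lemma softmax_pos: "softmax \<theta> a > 0"
  using Zs_pos[of \<theta>] by (simp add: softmax_alt)

lemma softmax_sum: "(\<Sum>a\<in>UNIV. softmax \<theta> a) = 1"
  using Zs_pos[of \<theta>] by (simp add: softmax_alt flip: sum_divide_distrib) (simp add: Zs_def)

lemma Zs_deriv: "(Zs has_derivative (\<lambda>h. \<Sum>b\<in>UNIV. exp (\<theta> $ b) * h $ b)) (at \<theta>)"
  unfolding Zs_def by (auto intro!: derivative_eq_intros simp: mult.commute)

definition DS :: "real^'n::finite \<Rightarrow> real^'n \<Rightarrow> 'n \<Rightarrow> real" where
  "DS \<theta> h a = softmax \<theta> a * (h $ a - (\<Sum>c\<in>UNIV. softmax \<theta> c * h $ c))"

lemma softmax_deriv: "((\<lambda>\<theta>. softmax \<theta> a) has_derivative (\<lambda>h. DS \<theta> h a)) (at \<theta>)"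
proof -
  have "((\<lambda>\<theta>. exp (\<theta> $ a) / Zs \<theta>) has_derivative (\<lambda>h. DS \<theta> h a)) (at \<theta>)"
    apply (rule derivative_eq_intros Zs_deriv refl)+
     apply (metis Zs_pos less_irrefl)
  proof (rule ext)
    fix h :: "real^'a"
    have e: "(\<Sum>c\<in>UNIV. exp (\<theta> $ c) / Zs \<theta> * h $ c) = (\<Sum>c\<in>UNIV. exp (\<theta> $ c) * h $ c) / Zs \<theta>"
      by (simp add: sum_divide_distrib)
    show "- exp (\<theta> $ a) * (inverse (Zs \<theta>) * (\<Sum>b\<in>UNIV. exp (\<theta> $ b) * h $ b) * inverse (Zs \<theta>)) +
          h $ a * exp (\<theta> $ a) / Zs \<theta> = DS \<theta> h a"
      using Zs_pos[of \<theta>] unfolding DS_def softmax_alt e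
      by (simp add: field_simps)
  qed
  then show ?thesis by (simp add: softmax_alt)
qed

definition rho :: "real^'n::finite \<Rightarrow> real^'n \<Rightarrow> real" where
  "rho r \<theta> = (\<Sum>c\<in>UNIV. softmax \<theta> c * r $ c)"

definition Gv :: "real \<Rightarrow> real^'n::finite \<Rightarrow> real^'n \<Rightarrow> real^'n" where
  "Gv \<eta> r \<theta> = (\<chi> b. softmax \<theta> b * (r $ b - rho r \<theta>) + (1/\<eta>) * (1 - real CARD('n) * softmax \<theta> b))"

lemma ln_softmax: "ln (softmax \<theta> a) = \<theta> $ a - ln (Zs \<theta>)"
  using Zs_pos[of \<theta>] by (simp add: softmax_alt ln_div)

lemma Phi_alt: fixes \<theta> :: "real^'n::finite" shows "Phi \<eta> r \<theta> = (\<Sum>a\<in>UNIV. softmax \<theta> a * r $ a) + (1/\<eta>) * ((\<Sum>a\<in>UNIV. \<theta> $ a) - real CARD('n) * ln (Zs \<theta>))"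
  by (simp add: Phi_def ln_softmax sum_subtractf)

lemma sum_softmax_h: "(\<Sum>b\<in>UNIV. exp (\<theta> $ b) * h $ b) / Zs \<theta> = (\<Sum>b\<in>UNIV. softmax \<theta> b * h $ b)"
  by (simp add: softmax_alt sum_divide_distrib)

lemma Phi_deriv: fixes \<theta> :: "real^'n::finite" assumes "\<eta> > 0"
  shows "(Phi \<eta> r has_derivative (\<lambda>h. Gv \<eta> r \<theta> \<bullet> h)) (at \<theta>)"
proof -
  have "((\<lambda>\<theta>. (\<Sum>a\<in>UNIV. softmax \<theta> a * r $ a) + (1/\<eta>) * ((\<Sum>a\<in>UNIV. \<theta> $ a) - real CARD('n) * ln (Zs \<theta>)))
     has_derivative (\<lambda>h. (\<Sum>a\<in>UNIV. DS \<theta> h a * r $ a) + (1/\<eta>) * ((\<Sum>a\<in>UNIV. h $ a) - real CARD('n) * ((\<Sum>b\<in>UNIV. exp (\<theta> $ b) * h $ b) / Zs \<theta>)))) (at \<theta>)"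
    using Zs_pos[of \<theta>] assms
    by (auto intro!: derivative_eq_intros softmax_deriv Zs_deriv simp: field_simps)
  moreover have "(\<lambda>h. (\<Sum>a\<in>UNIV. DS \<theta> h a * r $ a) + (1/\<eta>) * ((\<Sum>a\<in>UNIV. h $ a) - real CARD('n) * ((\<Sum>b\<in>UNIV. exp (\<theta> $ b) * h $ b) / Zs \<theta>)))
     = (\<lambda>h. Gv \<eta> r \<theta> \<bullet> h)"
  proof (rule ext)
    fix h :: "real^'n"
    show "(\<Sum>a\<in>UNIV. DS \<theta> h a * r $ a) + (1/\<eta>) * ((\<Sum>a\<in>UNIV. h $ a) - real CARD('n) * ((\<Sum>b\<in>UNIV. exp (\<theta> $ b) * h $ b) / Zs \<theta>))
     = Gv \<eta> r \<theta> \<bullet> h"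
      unfolding sum_softmax_h Gv_def inner_vec_def DS_def rho_def
      apply (simp add: algebra_simps sum.distrib sum_subtractf sum_distrib_left sum_distrib_right sum_divide_distrib)
      apply (subst sum.swap)
      apply (simp add: algebra_simps)
      done
  qed
  ultimately show ?thesis unfolding Phi_alt[abs_def] by simp
qed


lemma grad_eq: fixes \<theta> :: "real^'n::finite" assumes "\<eta> > 0"
  shows "grad (Phi \<eta> r) \<theta> = Gv \<eta> r \<theta>"
  unfolding grad_def
proof (rule some_equality)
  show "(Phi \<eta> r has_derivative (\<bullet>) (Gv \<eta> r \<theta>)) (at \<theta>)" by (rule Phi_deriv[OF assms])
next
  fix g assume "(Phi \<eta> r has_derivative (\<bullet>) g) (at \<theta>)"
  then have "(\<bullet>) g = (\<bullet>) (Gv \<eta> r \<theta>)" using Phi_deriv[OF assms] by (rule has_derivative_unique)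
  then have "g \<bullet> (g - Gv \<eta> r \<theta>) = Gv \<eta> r \<theta> \<bullet> (g - Gv \<eta> r \<theta>)" by metis
  then have "(g - Gv \<eta> r \<theta>) \<bullet> (g - Gv \<eta> r \<theta>) = 0" by (simp add: inner_diff_left)
  then show "g = Gv \<eta> r \<theta>" by simp
qed

definition DGv :: "real \<Rightarrow> real^'n::finite \<Rightarrow> real^'n \<Rightarrow> real^'n \<Rightarrow> real^'n" where
  "DGv \<eta> r \<theta> h = (\<chi> b. DS \<theta> h b * (r $ b - rho r \<theta>) - softmax \<theta> b * (\<Sum>c\<in>UNIV. DS \<theta> h c * r $ c)
      - (1/\<eta>) * real CARD('n) * DS \<theta> h b)"

lemma Gv_deriv: fixes \<theta> :: "real^'n::finite" assumes "\<eta> > 0"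
  shows "(Gv \<eta> r has_derivative DGv \<eta> r \<theta>) (at \<theta>)"
proof -
  have "((\<lambda>x. Gv \<eta> r x \<bullet> i) has_derivative (\<lambda>x. DGv \<eta> r \<theta> x \<bullet> i)) (at \<theta>)"
    if "i \<in> Basis" for i
  proof -
    from that obtain j where i: "i = axis j 1" by (auto simp: Basis_vec_def)
    show ?thesis unfolding i inner_axis Gv_def DGv_def rho_def
      using assms by (auto intro!: derivative_eq_intros softmax_deriv simp: algebra_simps)
  qed
  then show ?thesis
    using has_derivative_componentwise_within[of "Gv \<eta> r" "DGv \<eta> r \<theta>" \<theta> UNIV] by simp
qed

lemma hess_eq: fixes \<theta> :: "real^'n::finite" assumes "\<eta> > 0"
  shows "hessian (Phi \<eta> r) \<theta> *v y = DGv \<eta> r \<theta> y"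
proof -
  have g: "grad (Phi \<eta> r) = Gv \<eta> r" using grad_eq[OF assms] by (rule ext)
  have "Gv \<eta> r differentiable at \<theta>" using Gv_deriv[OF assms] by (auto simp: differentiable_def)
  then have "(Gv \<eta> r has_derivative (\<lambda>h. jacobian (Gv \<eta> r) (at \<theta>) *v h)) (at \<theta>)"
    using jacobian_works by blast
  then have "(\<lambda>h. jacobian (Gv \<eta> r) (at \<theta>) *v h) = DGv \<eta> r \<theta>"
    using Gv_deriv[OF assms] by (rule has_derivative_unique)
  then show ?thesis unfolding hessian_def g by metis
qed


lemma quad_form:
  fixes \<theta> y r :: "real^'n::finite"
  defines "m \<equiv> (\<Sum>c\<in>UNIV. softmax \<theta> c * y $ c)"
  defines "u \<equiv> (\<chi> b. softmax \<theta> b * (r $ b - rho r \<theta>))"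
  shows "y \<bullet> DGv \<eta> r \<theta> y = (\<Sum>b\<in>UNIV. u $ b * (y $ b)\<^sup>2) - 2 * (u \<bullet> y) * m
           - (real CARD('n) / \<eta>) * ((\<Sum>b\<in>UNIV. softmax \<theta> b * (y $ b)\<^sup>2) - m\<^sup>2)" (is "_ = ?rhs")
proof -
  have h1: "(\<Sum>c\<in>UNIV. DS \<theta> y c * r $ c) = (\<Sum>c\<in>UNIV. softmax \<theta> c * y $ c * r $ c) - m * rho r \<theta>"
    unfolding DS_def rho_def m_def[symmetric]
    by (simp add: algebra_simps sum_subtractf sum_distrib_left)
  have h2: "u \<bullet> y = (\<Sum>c\<in>UNIV. softmax \<theta> c * y $ c * r $ c) - m * rho r \<theta>"
    unfolding u_def inner_vec_def m_def
    by (simp add: algebra_simps sum_subtractf sum_distrib_left sum_distrib_right)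
  have hs: "(\<Sum>c\<in>UNIV. DS \<theta> y c * r $ c) = u \<bullet> y" using h1 h2 by simp
  have c: "DGv \<eta> r \<theta> y $ b = u $ b * (y $ b - m) - softmax \<theta> b * (u \<bullet> y)
     - (real CARD('n) / \<eta>) * (softmax \<theta> b * (y $ b - m))" for b
    apply (simp add: DGv_def hs)
    apply (simp add: DS_def m_def[symmetric] u_def algebra_simps)
    done
  have "y \<bullet> DGv \<eta> r \<theta> y = (\<Sum>b\<in>UNIV. u $ b * (y $ b)\<^sup>2 - u $ b * y $ b * m - (u \<bullet> y) * (softmax \<theta> b * y $ b)
       - (real CARD('n) / \<eta>) * (softmax \<theta> b * (y $ b)\<^sup>2 - m * (softmax \<theta> b * y $ b)))"
    unfolding inner_vec_def[of y] c
    by (rule sum.cong[OF refl]) (simp add: algebra_simps power2_eq_square)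
  also have "... = ?rhs"
  proof -
    have f1: "(\<Sum>b\<in>UNIV. u $ b * y $ b * m) = (u \<bullet> y) * m"
      by (simp add: inner_vec_def sum_distrib_right)
    have f2: "(\<Sum>b\<in>UNIV. (u \<bullet> y) * (softmax \<theta> b * y $ b)) = (u \<bullet> y) * m"
      unfolding sum_distrib_left[symmetric] m_def[symmetric] ..
    have f4: "(\<Sum>b\<in>UNIV. m * (softmax \<theta> b * y $ b)) = m\<^sup>2"
      unfolding sum_distrib_left[symmetric] m_def[symmetric] by (simp add: power2_eq_square)
    have f3: "(\<Sum>b\<in>UNIV. (real CARD('n) / \<eta>) * (softmax \<theta> b * (y $ b)\<^sup>2 - m * (softmax \<theta> b * y $ b)))
       = (real CARD('n) / \<eta>) * ((\<Sum>b\<in>UNIV. softmax \<theta> b * (y $ b)\<^sup>2) - m\<^sup>2)"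
      unfolding sum_distrib_left[symmetric] sum_subtractf f4[symmetric] ..
    show ?thesis unfolding sum_subtractf f1 f2 f3 by simp
  qed
  finally show ?thesis .
qed


theorem lemma4p1:
  fixes \<eta> :: real and r \<theta> y :: "real^'n::finite"
  assumes "CARD('n) \<ge> 2" and "\<eta> > 0"
  shows "\<bar>y \<bullet> (hessian (Phi \<eta> r) \<theta> *v y)\<bar>
           \<le> 3 * (norm (grad (Phi \<eta> r) \<theta>) + 5 * real CARD('n) / \<eta>) * (norm y)\<^sup>2"
proof -
  define p where "p = softmax \<theta>"
  define m where "m = (\<Sum>c\<in>UNIV. softmax \<theta> c * y $ c)"
  define u where "u = (\<chi> b. softmax \<theta> b * (r $ b - rho r \<theta>))"
  define K where "K = real CARD('n)"
  define g where "g = Gv \<eta> r \<theta>"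
  define w where "w = (\<chi> b. 1 - K * softmax \<theta> b)"
  define Y where "Y = (norm y)\<^sup>2"
  have K0: "K \<ge> 0" unfolding K_def by simp
  have pp: "softmax \<theta> b > 0" for b by (rule softmax_pos)
  have ps: "(\<Sum>b\<in>UNIV. softmax \<theta> b) = 1" by (rule softmax_sum)
  have p1: "softmax \<theta> b \<le> 1" for b
  proof -
    have "softmax \<theta> b \<le> (\<Sum>b\<in>UNIV. softmax \<theta> b)"
      by (rule member_le_sum) (auto intro: less_imp_le pp)
    then show ?thesis using ps by simp
  qed
  have Yeq: "Y = (\<Sum>b\<in>UNIV. (y $ b)\<^sup>2)"
    unfolding Y_def power2_norm_eq_inner inner_vec_def by (simp add: power2_eq_square)
  have yb: "\<bar>y $ b\<bar> \<le> norm y" for b by (rule component_le_norm_cart)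
  have ub: "\<bar>u $ b\<bar> \<le> norm u" for b by (rule component_le_norm_cart)
  have hq: "y \<bullet> (hessian (Phi \<eta> r) \<theta> *v y) = (\<Sum>b\<in>UNIV. u $ b * (y $ b)\<^sup>2) - 2 * (u \<bullet> y) * m
           - (K / \<eta>) * ((\<Sum>b\<in>UNIV. softmax \<theta> b * (y $ b)\<^sup>2) - m\<^sup>2)"
    unfolding hess_eq[OF assms(2)] quad_form m_def u_def K_def ..
  have b1: "\<bar>\<Sum>b\<in>UNIV. u $ b * (y $ b)\<^sup>2\<bar> \<le> norm u * Y"
  proof -
    have "\<bar>\<Sum>b\<in>UNIV. u $ b * (y $ b)\<^sup>2\<bar> \<le> (\<Sum>b\<in>UNIV. \<bar>u $ b * (y $ b)\<^sup>2\<bar>)" by (rule sum_abs)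
    also have "... \<le> (\<Sum>b\<in>UNIV. norm u * (y $ b)\<^sup>2)"
      by (rule sum_mono) (simp add: abs_mult mult_right_mono ub)
    finally show ?thesis by (simp add: Yeq sum_distrib_left)
  qed
  have mb: "\<bar>m\<bar> \<le> norm y"
  proof -
    have "\<bar>m\<bar> \<le> (\<Sum>c\<in>UNIV. \<bar>softmax \<theta> c * y $ c\<bar>)" unfolding m_def by (rule sum_abs)
    also have "... \<le> (\<Sum>c\<in>UNIV. softmax \<theta> c * norm y)"
      by (rule sum_mono) (simp add: abs_mult mult_left_mono yb pp less_imp_le)
    finally show ?thesis by (simp add: ps flip: sum_distrib_right)
  qed
  have sb: "\<bar>u \<bullet> y\<bar> \<le> norm u * norm y" by (rule Cauchy_Schwarz_ineq2)
  have b2: "\<bar>2 * (u \<bullet> y) * m\<bar> \<le> 2 * norm u * Y"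
  proof -
    have "\<bar>u \<bullet> y\<bar> * \<bar>m\<bar> \<le> (norm u * norm y) * norm y"
      by (rule mult_mono[OF sb mb]) auto
    then show ?thesis by (simp add: abs_mult Y_def power2_eq_square mult.assoc)
  qed
  have q1: "0 \<le> (\<Sum>b\<in>UNIV. softmax \<theta> b * (y $ b)\<^sup>2)"
    by (rule sum_nonneg) (simp add: pp less_imp_le)
  have q2: "(\<Sum>b\<in>UNIV. softmax \<theta> b * (y $ b)\<^sup>2) \<le> Y"
    unfolding Yeq by (rule sum_mono) (simp add: mult_left_le_one_le p1 pp less_imp_le)
  have q3: "m\<^sup>2 \<le> Y" unfolding Y_def using mb by (metis abs_ge_zero power2_abs power_mono)
  have b3: "\<bar>(\<Sum>b\<in>UNIV. softmax \<theta> b * (y $ b)\<^sup>2) - m\<^sup>2\<bar> \<le> Y"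
    using q1 q2 q3 by (simp add: abs_le_iff) (smt (verit) zero_le_power2)
  have b3': "\<bar>(K / \<eta>) * ((\<Sum>b\<in>UNIV. softmax \<theta> b * (y $ b)\<^sup>2) - m\<^sup>2)\<bar> \<le> (K / \<eta>) * Y"
    using b3 K0 assms(2) by (simp add: abs_mult mult_left_mono divide_right_mono)
  have gu: "g = u + (1/\<eta>) *\<^sub>R w"
    unfolding g_def u_def w_def Gv_def K_def by (simp add: vec_eq_iff)
  have wn: "norm w \<le> 2 * K"
  proof -
    have "norm w \<le> (\<Sum>b\<in>UNIV. \<bar>w $ b\<bar>)" by (rule norm_le_l1_cart)
    also have "... \<le> (\<Sum>b\<in>UNIV. 1 + K * softmax \<theta> b)"
      by (rule sum_mono) (simp add: w_def abs_le_iff K0 pp less_imp_le)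
    also have "... = K + K" by (simp add: sum.distrib ps K_def flip: sum_distrib_left)
    finally show ?thesis by simp
  qed
  have un: "norm u \<le> norm g + 2 * K / \<eta>"
  proof -
    have "u = g - (1/\<eta>) *\<^sub>R w" using gu by simp
    then have "norm u \<le> norm g + norm ((1/\<eta>) *\<^sub>R w)" by (metis norm_triangle_ineq4)
    also have "norm ((1/\<eta>) *\<^sub>R w) = norm w / \<eta>" using assms(2) by simp
    also have "... \<le> 2 * K / \<eta>" using wn assms(2) by (simp add: divide_right_mono)
    finally show ?thesis by simp
  qed
  have Y0: "Y \<ge> 0" unfolding Y_def by simp
  have "\<bar>y \<bullet> (hessian (Phi \<eta> r) \<theta> *v y)\<bar> \<le> norm u * Y + 2 * norm u * Y + (K / \<eta>) * Y"
    unfolding hq using b1 b2 b3' by linarith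
  also have "... = 3 * norm u * Y + (K / \<eta>) * Y" by simp
  also have "... \<le> 3 * (norm g + 2 * K / \<eta>) * Y + (K / \<eta>) * Y"
    using un Y0 by (simp add: mult_right_mono)
  also have "... \<le> 3 * (norm g + 5 * K / \<eta>) * Y"
    using Y0 K0 assms(2) by (simp add: algebra_simps divide_right_mono mult_left_mono)
  finally show ?thesis unfolding g_def Y_def K_def grad_eq[OF assms(2)] .
qed

end
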